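(* Every connected $\mathrm{NP}_2$-digital H-space $(X,e,\mu)$ has $X$ $\mathrm{NP}_2$-contractible.
   Context: A digital image is a finite set $X\subset\mathbb{Z}^n$ with a reflexive symmetric adjacency relation (a finite reflexive graph); continuous maps send adjacent points to adjacent points; connectedness is graph connectedness. On products, $\mathrm{NP}_2$ declares two tuples adjacent iff coordinates are adjacent in at most 2 positions and equal elsewhere. An $\mathrm{NP}_2$-homotopy from $f$ to $g:X\to Y$ is an $\mathrm{NP}_2$-continuous $H:X\times[0,m]_{\mathbb{Z}}\to Y$ with $H(\cdot,0)=f$, $H(\cdot,m)=g$; write $f\simeq_2 g$. $\mathrm{NP}_2$-contractible means $\mathrm{NP}_2$-homotopy equivalent to a single point. An $\mathrm{NP}_2$-digital H-space is $(X,e,\mu)$ with $\mu:X\times X\to X$ $\mathrm{NP}_2$-continuous, $\mu\circ(\mathrm{id}_X,c_e)\simeq_2\mathrm{id}_X$, $\mu\circ(c_e,\mathrm{id}_X)\simeq_2\mathrm{id}_X$, where $(f,g)(x)=(f(x),g(x))$ and $c_e$ is constant at $e$ (homotopies need not be pointed). *)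

theory Defs
  imports Main
begin

definition digital_image :: "'a set \<Rightarrow> ('a \<Rightarrow> 'a \<Rightarrow> bool) \<Rightarrow> bool" where
  "digital_image X adj \<longleftrightarrow> finite X \<and> (\<forall>x\<in>X. adj x x) \<and> (\<forall>x\<in>X. \<forall>y\<in>X. adj x y \<longrightarrow> adj y x)"

definition dcont :: "'a set \<Rightarrow> ('a \<Rightarrow> 'a \<Rightarrow> bool) \<Rightarrow> 'b set \<Rightarrow> ('b \<Rightarrow> 'b \<Rightarrow> bool) \<Rightarrow> ('a \<Rightarrow> 'b) \<Rightarrow> bool" where
  "dcont X a Y b f \<longleftrightarrow> f ` X \<subseteq> Y \<and> (\<forall>x\<in>X. \<forall>y\<in>X. a x y \<longrightarrow> b (f x) (f y))"

definition dconnected :: "'a set \<Rightarrow> ('a \<Rightarrow> 'a \<Rightarrow> bool) \<Rightarrow> bool" where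
  "dconnected X a \<longleftrightarrow> (\<forall>x\<in>X. \<forall>y\<in>X. (x, y) \<in> {(u, v). u \<in> X \<and> v \<in> X \<and> a u v}\<^sup>*)"

text \<open>NP_2 adjacency on a product of two factors: the tuples agree or are adjacent in at most
  two coordinates and are equal elsewhere; with two factors and reflexive adjacencies this says
  both coordinates are adjacent (or equal).\<close>
definition np2_adj :: "('a \<Rightarrow> 'a \<Rightarrow> bool) \<Rightarrow> ('b \<Rightarrow> 'b \<Rightarrow> bool) \<Rightarrow> 'a \<times> 'b \<Rightarrow> 'a \<times> 'b \<Rightarrow> bool" where
  "np2_adj a b p q \<longleftrightarrow> (a (fst p) (fst q) \<or> fst p = fst q) \<and> (b (snd p) (snd q) \<or> snd p = snd q)"

definition int_adj :: "int \<Rightarrow> int \<Rightarrow> bool" where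
  "int_adj i j \<longleftrightarrow> \<bar>i - j\<bar> \<le> 1"

definition np2_homotopic :: "'a set \<Rightarrow> ('a \<Rightarrow> 'a \<Rightarrow> bool) \<Rightarrow> 'b set \<Rightarrow> ('b \<Rightarrow> 'b \<Rightarrow> bool)
    \<Rightarrow> ('a \<Rightarrow> 'b) \<Rightarrow> ('a \<Rightarrow> 'b) \<Rightarrow> bool" where
  "np2_homotopic X a Y b f g \<longleftrightarrow>
     (\<exists>m::int. m \<ge> 0 \<and> (\<exists>H. dcont (X \<times> {0..m}) (np2_adj a int_adj) Y b H
        \<and> (\<forall>x\<in>X. H (x, 0) = f x \<and> H (x, m) = g x)))"

definition np2_htpy_equiv :: "'a set \<Rightarrow> ('a \<Rightarrow> 'a \<Rightarrow> bool) \<Rightarrow> 'b set \<Rightarrow> ('b \<Rightarrow> 'b \<Rightarrow> bool) \<Rightarrow> bool" where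
  "np2_htpy_equiv X a Y b \<longleftrightarrow>
     (\<exists>f g. dcont X a Y b f \<and> dcont Y b X a g
        \<and> np2_homotopic X a X a (g \<circ> f) id \<and> np2_homotopic Y b Y b (f \<circ> g) id)"

definition np2_contractible :: "'a set \<Rightarrow> ('a \<Rightarrow> 'a \<Rightarrow> bool) \<Rightarrow> bool" where
  "np2_contractible X a \<longleftrightarrow> np2_htpy_equiv X a {()} (\<lambda>_ _. True)"

definition np2_H_space :: "'a set \<Rightarrow> ('a \<Rightarrow> 'a \<Rightarrow> bool) \<Rightarrow> 'a \<Rightarrow> ('a \<times> 'a \<Rightarrow> 'a) \<Rightarrow> bool" where
  "np2_H_space X a e \<mu> \<longleftrightarrow> digital_image X a \<and> e \<in> X
     \<and> dcont (X \<times> X) (np2_adj a a) X a \<mu>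
     \<and> np2_homotopic X a X a (\<lambda>x. \<mu> (x, e)) id
     \<and> np2_homotopic X a X a (\<lambda>x. \<mu> (e, x)) id"

end

theory Submission imports Defs begin

lemma htpy_start_cont:
  assumes "np2_homotopic X a Y b f g" shows "dcont X a Y b f"
proof -
  obtain m H where m: "m\<ge>0" and H: "dcont (X \<times> {0..m}) (np2_adj a int_adj) Y b H"
    and e: "\<forall>x\<in>X. H (x,0) = f x \<and> H (x,m) = g x"
    using assms unfolding np2_homotopic_def by blast
  show ?thesis unfolding dcont_def
  proof safe
    fix x assume x: "x\<in>X" then have "(x,0)\<in>X\<times>{0..m}" using m by auto
    then show "f x \<in> Y" using H e x unfolding dcont_def by force
  next
    fix x y assume xy: "x\<in>X" "y\<in>X" "a x y"
    have "np2_adj a int_adj (x,0) (y,0)" using xy by (simp add: np2_adj_def int_adj_def)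
    moreover have "(x,0)\<in>X\<times>{0..m}" "(y,0)\<in>X\<times>{0..m}" using m xy by auto
    ultimately show "b (f x) (f y)" using H e xy unfolding dcont_def by metis
  qed
qed

lemma htpy_refl:
  assumes "dcont X a Y b f" "\<forall>x\<in>X. b (f x) (f x)"
  shows "np2_homotopic X a Y b f f"
  unfolding np2_homotopic_def
proof (intro exI conjI)
  show "(0::int) \<le> 0" by simp
  show "dcont (X \<times> {0..0}) (np2_adj a int_adj) Y b (\<lambda>p. f (fst p))"
    using assms unfolding dcont_def np2_adj_def by auto
  show "\<forall>x\<in>X. f (fst (x, 0::int)) = f x \<and> f (fst (x, 0::int)) = f x" by simp
qed

lemma htpy_one_step:
  assumes c: "dcont X a Y b f" "dcont X a Y b g"
   and cr: "\<forall>x\<in>X. \<forall>x'\<in>X. (a x x' \<or> x = x') \<longrightarrow> b (f x) (g x') \<and> b (g x) (f x')"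
   and r: "\<forall>x\<in>X. b (f x) (f x)" "\<forall>x\<in>X. b (g x) (g x)"
  shows "np2_homotopic X a Y b f g"
  unfolding np2_homotopic_def
proof (intro exI conjI)
  show "(0::int) \<le> 1" by simp
  let ?H = "\<lambda>p::'a\<times>int. if snd p = 0 then f (fst p) else g (fst p)"
  show "dcont (X \<times> {0..1}) (np2_adj a int_adj) Y b ?H"
    unfolding dcont_def
  proof safe
    fix x and t::int assume "x\<in>X" "t\<in>{0..1}"
    then show "?H (x,t) \<in> Y" using c unfolding dcont_def by auto
  next
    fix x t x' t' assume h: "x\<in>X" "(t::int)\<in>{0..1}" "x'\<in>X" "(t'::int)\<in>{0..1}"
      "np2_adj a int_adj (x,t) (x',t')"
    then have A: "a x x' \<or> x = x'" unfolding np2_adj_def by auto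
    have ff: "b (f x) (f x')" using A c(1) r(1) h unfolding dcont_def by auto
    have gg: "b (g x) (g x')" using A c(2) r(2) h unfolding dcont_def by auto
    show "b (?H (x,t)) (?H (x',t'))" using ff gg cr h A by auto
  qed
  show "\<forall>x\<in>X. ?H (x,0) = f x \<and> ?H (x,1) = g x" by simp
qed

lemma htpy_trans:
  assumes "np2_homotopic X a Y b f g" "np2_homotopic X a Y b g h"
  shows "np2_homotopic X a Y b f h"
proof -
  obtain m1 H1 where m1: "m1\<ge>0" and H1: "dcont (X \<times> {0..m1}) (np2_adj a int_adj) Y b H1"
    and e1: "\<forall>x\<in>X. H1 (x,0) = f x \<and> H1 (x,m1) = g x"
    using assms(1) unfolding np2_homotopic_def by blast
  obtain m2 H2 where m2: "m2\<ge>0" and H2: "dcont (X \<times> {0..m2}) (np2_adj a int_adj) Y b H2"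
    and e2: "\<forall>x\<in>X. H2 (x,0) = g x \<and> H2 (x,m2) = h x"
    using assms(2) unfolding np2_homotopic_def by blast
  let ?H = "\<lambda>p::'a\<times>int. if snd p \<le> m1 then H1 p else H2 (fst p, snd p - m1)"
  have cont: "b (?H (x,t)) (?H (x',t'))" if h: "x\<in>X" "t\<in>{0..m1+m2}" "x'\<in>X" "t'\<in>{0..m1+m2}"
      "np2_adj a int_adj (x,t) (x',t')" for x x' t t'
  proof -
    have A: "a x x' \<or> x = x'" and T: "\<bar>t - t'\<bar> \<le> 1" using h(5) unfolding np2_adj_def int_adj_def by auto
    consider "t \<le> m1" "t' \<le> m1" | "t > m1" "t' > m1" | "t = m1" "t' = m1 + 1" | "t' = m1" "t = m1 + 1"
      using T by linarith
    then show ?thesis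
    proof cases
      case 1 then show ?thesis using H1 h unfolding dcont_def by auto
    next
      case 2
      have "np2_adj a int_adj (x,t-m1) (x',t'-m1)" using A T unfolding np2_adj_def int_adj_def by auto
      then show ?thesis using 2 H2 h unfolding dcont_def by auto
    next
      case 3
      have "np2_adj a int_adj (x,0) (x',1)" using A unfolding np2_adj_def int_adj_def by auto
      moreover have "(x,0) \<in> X \<times> {0..m2}" "(x',1) \<in> X \<times> {0..m2}" using h 3 m2 by auto
      ultimately have "b (H2 (x,0)) (H2 (x',1))" using H2 unfolding dcont_def by blast
      then show ?thesis using 3 e1 e2 h by auto
    next
      case 4
      have "np2_adj a int_adj (x,1) (x',0)" using A unfolding np2_adj_def int_adj_def by auto
      moreover have "(x,1) \<in> X \<times> {0..m2}" "(x',0) \<in> X \<times> {0..m2}" using h 4 m2 by auto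
      ultimately have "b (H2 (x,1)) (H2 (x',0))" using H2 unfolding dcont_def by blast
      then show ?thesis using 4 e1 e2 h by auto
    qed
  qed
  have img: "?H p \<in> Y" if "p \<in> X \<times> {0..m1+m2}" for p
    using that H1 H2 unfolding dcont_def by (cases p) (auto simp: not_le)
  show ?thesis unfolding np2_homotopic_def
  proof (intro exI conjI)
    show "0 \<le> m1 + m2" using m1 m2 by simp
    show "dcont (X \<times> {0..m1+m2}) (np2_adj a int_adj) Y b ?H"
      unfolding dcont_def
    proof (intro conjI ballI impI)
      show "?H ` (X \<times> {0..m1+m2}) \<subseteq> Y" using img by blast
    next
      fix p q assume "p \<in> X \<times> {0..m1+m2}" "q \<in> X \<times> {0..m1+m2}" "np2_adj a int_adj p q"
      moreover obtain x t x' t' where pq: "p = (x,t)" "q = (x',t')" by (cases p, cases q) auto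
      ultimately show "b (?H p) (?H q)" unfolding pq by (intro cont) auto
    qed
    show "\<forall>x\<in>X. ?H (x,0) = f x \<and> ?H (x,m1+m2) = h x"
      using e1 e2 m1 m2 by auto
  qed
qed

lemma stiff_htpy:
  assumes Sdom: "\<And>y w. y\<in>Y \<Longrightarrow> w\<in>Y \<Longrightarrow> (\<forall>z\<in>Y. adj y z \<longrightarrow> adj w z) \<Longrightarrow> w = y"
    and cont: "\<forall>p\<in>Y\<times>{0..m}. \<forall>q\<in>Y\<times>{0..m}. np2_adj adj int_adj p q \<longrightarrow> adj (K p) (K q)"
    and into: "\<forall>p\<in>Y\<times>{0..m}. K p \<in> Y"
    and start: "\<forall>y\<in>Y. K (y,0) = y"
  shows "\<forall>y\<in>Y. \<forall>t\<in>{0..(m::int)}. K (y,t) = y"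
proof -
  have "\<forall>y\<in>Y. K (y, int n) = y" if "int n \<le> m" for n
    using that
  proof (induction n)
    case 0 then show ?case using start by simp
  next
    case (Suc n)
    show ?case
    proof
      fix y assume y: "y\<in>Y"
      have w: "K (y, int (Suc n)) \<in> Y" using into y Suc.prems by auto
      have "\<forall>z\<in>Y. adj y z \<longrightarrow> adj (K (y, int (Suc n))) z"
      proof safe
        fix z assume z: "z\<in>Y" "adj y z"
        have "np2_adj adj int_adj (y, int (Suc n)) (z, int n)"
          using z unfolding np2_adj_def int_adj_def by auto
        then have "adj (K (y, int (Suc n))) (K (z, int n))"
          using cont y z Suc.prems by auto
        then show "adj (K (y, int (Suc n))) z" using Suc.IH Suc.prems z by auto
      qed
      then show "K (y, int (Suc n)) = y" using Sdom y w by blast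
    qed
  qed
  then show ?thesis by (metis atLeastAtMost_iff nonneg_int_cases)
qed


theorem mainTheorem13:
  fixes X :: "'a set" and adj :: "'a \<Rightarrow> 'a \<Rightarrow> bool" and e :: 'a and \<mu> :: "'a \<times> 'a \<Rightarrow> 'a"
  assumes "np2_H_space X adj e \<mu>"
    and "dconnected X adj"
  shows "np2_contractible X adj"
proof -
  have fin: "finite X" and refl: "\<forall>x\<in>X. adj x x" and sym: "\<forall>x\<in>X. \<forall>y\<in>X. adj x y \<longrightarrow> adj y x"
    and eX: "e \<in> X" and muc: "dcont (X \<times> X) (np2_adj adj adj) X adj \<mu>"
    and hR: "np2_homotopic X adj X adj (\<lambda>x. \<mu> (x, e)) id"
    and hL: "np2_homotopic X adj X adj (\<lambda>x. \<mu> (e, x)) id"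
    using assms(1) unfolding np2_H_space_def digital_image_def by auto
  define P where "P r \<longleftrightarrow> r ` X \<subseteq> X \<and> (\<forall>x\<in>X. r (r x) = r x) \<and> np2_homotopic X adj X adj r id" for r :: "'a \<Rightarrow> 'a"
  have idc: "dcont X adj X adj id" unfolding dcont_def by auto
  have "P id" unfolding P_def using htpy_refl[OF idc] refl by auto
  then obtain r where Pr: "P r" and rmin: "\<forall>r'. P r' \<longrightarrow> card (r ` X) \<le> card (r' ` X)"
    using ex_has_least_nat[of P id "\<lambda>r. card (r ` X)"] by blast
  have rX: "r ` X \<subseteq> X" and ridem: "\<forall>x\<in>X. r (r x) = r x" and rh: "np2_homotopic X adj X adj r id"
    using Pr unfolding P_def by auto
  have rc: "dcont X adj X adj r" using htpy_start_cont[OF rh] .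
  define Y where "Y = r ` X"
  have YX: "Y \<subseteq> X" using rX Y_def by simp
  have finY: "finite Y" using fin Y_def by simp
  have rY: "\<forall>y\<in>Y. r y = y" using ridem Y_def by auto
  have radj: "adj (r x) (r x')" if "x\<in>X" "x'\<in>X" "adj x x' \<or> x = x'" for x x'
    using that rc refl rX unfolding dcont_def by auto
  have Sdom: "w = y" if y: "y\<in>Y" and w: "w\<in>Y" and dom: "\<forall>z\<in>Y. adj y z \<longrightarrow> adj w z" for y w
  proof (rule ccontr)
    assume wy: "w \<noteq> y"
    define f where "f z = (if z = y then w else z)" for z
    define r' where "r' = f \<circ> r"
    have fY: "f z \<in> Y" if "z \<in> Y" for z using that w f_def by auto
    have fadj: "adj (f a) b \<and> adj a (f b) \<and> adj (f a) (f b)" if ab: "a\<in>Y" "b\<in>Y" "adj a b" for a b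
    proof -
      have ba: "adj b a" using sym ab YX by auto
      have 1: "adj (f a) b" using ab dom f_def by auto
      have 2: "adj a (f b)"
      proof (cases "b = y")
        case True then have "adj w a" using dom ab ba by auto
        then show ?thesis using True sym w ab YX f_def by auto
      qed (simp add: f_def ab)
      have 3: "adj (f a) (f b)"
      proof (cases "a = y")
        case True
        show ?thesis
        proof (cases "b = y")
          case True then show ?thesis using refl w YX f_def \<open>a = y\<close> by auto
        next
          case False then show ?thesis using 1 f_def by auto
        qed
      next
        case False then show ?thesis using 2 f_def by auto
      qed
      show ?thesis using 1 2 3 by blast
    qed
    have rXY: "r x \<in> Y" if "x \<in> X" for x using that Y_def by auto
    have r'c: "dcont X adj X adj r'"
      unfolding dcont_def r'_def using fadj radj rXY fY YX by (auto simp: subset_iff)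
    have r'h: "np2_homotopic X adj X adj r' r"
      using htpy_one_step[OF r'c rc] fadj radj rXY refl fY YX rX unfolding r'_def by (auto simp: subset_iff)
    have "P r'"
      unfolding P_def
    proof (intro conjI)
      show "r' ` X \<subseteq> X" using rXY fY YX r'_def by auto
      show "\<forall>x\<in>X. r' (r' x) = r' x"
      proof
        fix x assume x: "x \<in> X"
        have "f (r x) \<in> Y" using fY rXY x by auto
        then have "r (f (r x)) = f (r x)" using rY by auto
        then show "r' (r' x) = r' x" unfolding r'_def using wy f_def by auto
      qed
      show "np2_homotopic X adj X adj r' id" using htpy_trans[OF r'h rh] .
    qed
    have "r' ` X \<subseteq> Y - {y}" using rXY w wy f_def r'_def by auto
    then have "card (r' ` X) < card Y" using finY y
      by (meson card_Diff1_less card_mono finite_Diff le_less_trans)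
    then show False using rmin \<open>P r'\<close> Y_def by fastforce
  qed
  have rHY: "\<And>x. x \<in> X \<Longrightarrow> r x \<in> Y" using Y_def by auto
  have K1: "\<forall>y\<in>Y. r (\<mu> (y, e)) = y"
  proof -
    obtain m H where m: "m\<ge>0" and H: "dcont (X \<times> {0..m}) (np2_adj adj int_adj) X adj H"
      and eH: "\<forall>x\<in>X. H (x,0) = \<mu> (x,e) \<and> H (x,m) = id x"
      using hR unfolding np2_homotopic_def by blast
    let ?K = "\<lambda>p. r (H (fst p, m - snd p))"
    have "\<forall>y\<in>Y. \<forall>t\<in>{0..m}. ?K (y,t) = y"
    proof (rule stiff_htpy[OF Sdom])
      show "\<forall>p\<in>Y\<times>{0..m}. \<forall>q\<in>Y\<times>{0..m}. np2_adj adj int_adj p q \<longrightarrow> adj (?K p) (?K q)"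
      proof (intro ballI impI)
        fix p q assume pq: "p\<in>Y\<times>{0..m}" "q\<in>Y\<times>{0..m}" "np2_adj adj int_adj p q"
        have "np2_adj adj int_adj (fst p, m - snd p) (fst q, m - snd q)"
          using pq(3) unfolding np2_adj_def int_adj_def by (auto simp: abs_minus_commute)
        moreover have "(fst p, m - snd p) \<in> X \<times> {0..m}" "(fst q, m - snd q) \<in> X \<times> {0..m}"
          using pq YX by auto
        ultimately have "adj (H (fst p, m - snd p)) (H (fst q, m - snd q))"
          using H unfolding dcont_def by blast
        moreover have "H (fst p, m - snd p) \<in> X" "H (fst q, m - snd q) \<in> X"
          using H \<open>(fst p, m - snd p) \<in> X \<times> {0..m}\<close> \<open>(fst q, m - snd q) \<in> X \<times> {0..m}\<close>
          unfolding dcont_def by auto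
        ultimately show "adj (?K p) (?K q)" using radj by blast
      qed
      show "\<forall>p\<in>Y\<times>{0..m}. ?K p \<in> Y"
        using H YX rHY unfolding dcont_def by (auto simp: subset_iff)
      show "\<forall>y\<in>Y. ?K (y,0) = y" using eH rY YX by auto
    qed
    then show ?thesis using eH m YX by force
  qed
  have K2: "\<forall>y\<in>Y. r (\<mu> (e, y)) = y"
  proof -
    obtain m H where m: "m\<ge>0" and H: "dcont (X \<times> {0..m}) (np2_adj adj int_adj) X adj H"
      and eH: "\<forall>x\<in>X. H (x,0) = \<mu> (e,x) \<and> H (x,m) = id x"
      using hL unfolding np2_homotopic_def by blast
    let ?K = "\<lambda>p. r (H (fst p, m - snd p))"
    have "\<forall>y\<in>Y. \<forall>t\<in>{0..m}. ?K (y,t) = y"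
    proof (rule stiff_htpy[OF Sdom])
      show "\<forall>p\<in>Y\<times>{0..m}. \<forall>q\<in>Y\<times>{0..m}. np2_adj adj int_adj p q \<longrightarrow> adj (?K p) (?K q)"
      proof (intro ballI impI)
        fix p q assume pq: "p\<in>Y\<times>{0..m}" "q\<in>Y\<times>{0..m}" "np2_adj adj int_adj p q"
        have "np2_adj adj int_adj (fst p, m - snd p) (fst q, m - snd q)"
          using pq(3) unfolding np2_adj_def int_adj_def by (auto simp: abs_minus_commute)
        moreover have "(fst p, m - snd p) \<in> X \<times> {0..m}" "(fst q, m - snd q) \<in> X \<times> {0..m}"
          using pq YX by auto
        ultimately have "adj (H (fst p, m - snd p)) (H (fst q, m - snd q))"
          using H unfolding dcont_def by blast
        moreover have "H (fst p, m - snd p) \<in> X" "H (fst q, m - snd q) \<in> X"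
          using H \<open>(fst p, m - snd p) \<in> X \<times> {0..m}\<close> \<open>(fst q, m - snd q) \<in> X \<times> {0..m}\<close>
          unfolding dcont_def by auto
        ultimately show "adj (?K p) (?K q)" using radj by blast
      qed
      show "\<forall>p\<in>Y\<times>{0..m}. ?K p \<in> Y"
        using H YX rHY unfolding dcont_def by (auto simp: subset_iff)
      show "\<forall>y\<in>Y. ?K (y,0) = y" using eH rY YX by auto
    qed
    then show ?thesis using eH m YX by force
  qed
  define R where "R = {(u, v). u \<in> X \<and> v \<in> X \<and> adj u v}"
  have muadj: "adj (r (\<mu> (y,a))) (r (\<mu> (z,b)))"
    if "y\<in>X" "z\<in>X" "a\<in>X" "b\<in>X" "adj y z \<or> y = z" "adj a b \<or> a = b" for y z a b
  proof -
    have "np2_adj adj adj (y,a) (z,b)" using that unfolding np2_adj_def by auto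
    then have "adj (\<mu> (y,a)) (\<mu> (z,b))" using muc that unfolding dcont_def by auto
    moreover have "\<mu> (y,a) \<in> X" "\<mu> (z,b) \<in> X" using muc that unfolding dcont_def by auto
    ultimately show ?thesis using radj by blast
  qed
  have stepper: "\<forall>y\<in>Y. g q y = y"
    if gdef: "\<And>c y. g c y = r (\<mu> (y, c)) \<or> g c y = r (\<mu> (c, y))"
    and kind: "(\<forall>c y. g c y = r (\<mu> (y, c))) \<or> (\<forall>c y. g c y = r (\<mu> (c, y)))"
    and pq: "p\<in>X" "q\<in>X" "adj p q" and IH: "\<forall>y\<in>Y. g p y = y" for g p q
  proof -
    let ?K = "\<lambda>s. if snd s = 0 then g p (fst s) else g q (fst s)"
    have gadj: "adj (g a y) (g b z)" if "a\<in>{p,q}" "b\<in>{p,q}" "y\<in>Y" "z\<in>Y" "adj y z \<or> y = z" for a b y z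
    proof -
      have "adj a b \<or> a = b" using that pq sym by auto
      then show ?thesis using kind muadj that pq YX by (auto simp: subset_iff)
    qed
    have "\<forall>y\<in>Y. \<forall>t\<in>{0..1::int}. ?K (y,t) = y"
    proof (rule stiff_htpy[OF Sdom])
      show "\<forall>s\<in>Y\<times>{0..1}. \<forall>s'\<in>Y\<times>{0..1}. np2_adj adj int_adj s s' \<longrightarrow> adj (?K s) (?K s')"
        unfolding np2_adj_def using gadj by auto
      have "g c y \<in> Y" if "y \<in> Y" "c \<in> X" for c y
        using gdef[of c y] rHY muc that YX unfolding dcont_def by (auto simp: subset_iff)
      then show "\<forall>s\<in>Y\<times>{0..1::int}. ?K s \<in> Y" using pq by auto
      show "\<forall>y\<in>Y. ?K (y,0) = y" using IH by auto
    qed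
    note A = this
    show ?thesis
    proof
      fix y assume y: "y \<in> Y"
      have "?K (y,1::int) = y" using A[rule_format, OF y, of 1] by simp
      then show "g q y = y" by simp
    qed
  qed
  have conn: "(e, p) \<in> R\<^sup>*" if "p \<in> X" for p
    using assms(2) eX that unfolding dconnected_def R_def by blast
  have P1: "\<forall>y\<in>Y. r (\<mu> (y, p)) = y" if "p \<in> X" for p
    using conn[OF that]
  proof (induction rule: rtrancl_induct)
    case base then show ?case using K1 by simp
  next
    case (step p q)
    then show ?case using stepper[of "\<lambda>c y. r (\<mu> (y, c))" p q] R_def by auto
  qed
  have P2: "\<forall>y\<in>Y. r (\<mu> (p, y)) = y" if "p \<in> X" for p
    using conn[OF that]
  proof (induction rule: rtrancl_induct)
    case base then show ?case using K2 by simp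
  next
    case (step p q)
    then show ?case using stepper[of "\<lambda>c y. r (\<mu> (c, y))" p q] R_def by auto
  qed
  have Yone: "y = z" if "y \<in> Y" "z \<in> Y" for y z
    using P1[of z] P2[of y] that YX by (metis subsetD)
  define c where "c = r e"
  have cX: "c \<in> X" using rX eX c_def by auto
  have rconst: "\<forall>x\<in>X. r x = c" using Yone rHY eX c_def by blast
  show ?thesis
    unfolding np2_contractible_def np2_htpy_equiv_def
  proof (intro exI conjI)
    show "dcont X adj {()} (\<lambda>_ _. True) (\<lambda>_. ())" unfolding dcont_def by auto
    show "dcont {()} (\<lambda>_ _. True) X adj (\<lambda>_. c)" unfolding dcont_def using cX refl by auto
    show "np2_homotopic X adj X adj ((\<lambda>_. c) \<circ> (\<lambda>_. ())) id"
    proof -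
      obtain m H where "m\<ge>0" "dcont (X \<times> {0..m}) (np2_adj adj int_adj) X adj H"
        "\<forall>x\<in>X. H (x,0) = r x \<and> H (x,m) = id x"
        using rh unfolding np2_homotopic_def by blast
      then show ?thesis unfolding np2_homotopic_def using rconst by auto
    qed
    show "np2_homotopic {()} (\<lambda>_ _. True) {()} (\<lambda>_ _. True) ((\<lambda>_. ()) \<circ> (\<lambda>_. c)) id"
      unfolding np2_homotopic_def dcont_def by (intro exI[of _ 0] exI[of _ "\<lambda>_. ()"]) auto
  qed
qed

end
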